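(* Let $F:\mathbb{R}^p\to\mathbb{R}^p$ be single-valued, let $\kappa_1,\kappa_2\ge0$, $\beta\in(0,1]$, $\eta>0$, and let $\{(x^k,y^k)\}$ be generated by: start from $x^0\in\mathrm{dom}\,F$, set $x^{-1}=y^{-1}:=x^0$, and for $k\ge0$ $$y^k:=x^k-\tfrac{\eta}{\beta}u^k,\qquad x^{k+1}:=x^k-\eta Fy^k,$$ where $u^k\in\mathbb{R}^p$ satisfies $\|Fx^k-u^k\|^2\le\kappa_1\|Fx^k-Fy^{k-1}\|^2+\kappa_2\|Fx^k-Fx^{k-1}\|^2$. Then for any $\gamma>0$, any $\hat x\in\mathrm{dom}\,F$ and any $k\ge0$, $$\begin{aligned}\|x^{k+1}-\hat x\|^2\le{}&\|x^k-\hat x\|^2-\beta\|y^k-x^k\|^2+\tfrac{\eta^2}{\gamma}\|Fy^k-u^k\|^2-2\eta\langle Fy^k,y^k-\hat x\rangle\\&-(\beta-\gamma)\|x^{k+1}-y^k\|^2-(1-\beta)\|x^{k+1}-x^k\|^2.\end{aligned}$$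
   Context: $\|\cdot\|$, $\langle\cdot,\cdot\rangle$ are the Euclidean norm and inner product. *)

theory Defs
  imports "HOL-Analysis.Analysis"
begin

end

theory Submission
  imports Defs
begin

lemma lemma1_aux: "(b::real) > 0 \<Longrightarrow> (g::real) > 0 \<Longrightarrow> (ee - 2 * h * eg + h\<^sup>2 * gg) + h\<^sup>2 * g * ((1/b - 1/g)\<^sup>2 * uu - 2 * (1/b - 1/g) * (1 - 1/g) * ug + (1 - 1/g)\<^sup>2 * gg) = ee - b * ((h/b)\<^sup>2 * uu) + h\<^sup>2 / g * (gg - 2 * ug + uu)
        - 2 * h * (eg - (h/b) * ug) - (b - g) * ((h/b)\<^sup>2 * uu - 2 * (h/b) * h * ug + h\<^sup>2 * gg)
        - (1 - b) * (h\<^sup>2 * gg)"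
  by (simp add: field_simps power2_eq_square)

theorem lemma1:
  fixes F :: "real^'p \<Rightarrow> real^'p"
    and x y u :: "nat \<Rightarrow> real^'p"
    and \<kappa>1 \<kappa>2 \<beta> \<eta> \<gamma> :: real
    and xhat :: "real^'p"
    and k :: nat
  assumes k1: "\<kappa>1 \<ge> 0" and k2: "\<kappa>2 \<ge> 0"
    and beta: "0 < \<beta>" "\<beta> \<le> 1"
    and eta: "\<eta> > 0"
    and y_def: "\<And>k. y k = x k - (\<eta> / \<beta>) *\<^sub>R u k"
    and x_step: "\<And>k. x (Suc k) = x k - \<eta> *\<^sub>R F (y k)"
    and u_cond: "\<And>k. (norm (F (x k) - u k))\<^sup>2
        \<le> \<kappa>1 * (norm (F (x k) - F (if k = 0 then x 0 else y (k - 1))))\<^sup>2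
         + \<kappa>2 * (norm (F (x k) - F (if k = 0 then x 0 else x (k - 1))))\<^sup>2"
    and gamma: "\<gamma> > 0"
  shows "(norm (x (Suc k) - xhat))\<^sup>2
      \<le> (norm (x k - xhat))\<^sup>2 - \<beta> * (norm (y k - x k))\<^sup>2
         + (\<eta>\<^sup>2 / \<gamma>) * (norm (F (y k) - u k))\<^sup>2
         - 2 * \<eta> * (F (y k) \<bullet> (y k - xhat))
         - (\<beta> - \<gamma>) * (norm (x (Suc k) - y k))\<^sup>2
         - (1 - \<beta>) * (norm (x (Suc k) - x k))\<^sup>2"
proof -
  define U where "U = u k"
  define G where "G = F (y k)"
  define E where "E = x k - xhat"
  define P where "P = (1/\<beta> - 1/\<gamma>) *\<^sub>R U - (1 - 1/\<gamma>) *\<^sub>R G"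
  have x1: "x (Suc k) - xhat = E - \<eta> *\<^sub>R G" using x_step by (simp add: E_def G_def algebra_simps)
  have y1: "y k - x k = - (\<eta>/\<beta>) *\<^sub>R U" using y_def by (simp add: U_def)
  have y2: "y k - xhat = E - (\<eta>/\<beta>) *\<^sub>R U" using y_def by (simp add: U_def E_def algebra_simps)
  have x2: "x (Suc k) - y k = (\<eta>/\<beta>) *\<^sub>R U - \<eta> *\<^sub>R G" proof -
    have a: "x (Suc k) = x k - \<eta> *\<^sub>R G" using x_step G_def by simp
    have b: "y k = x k - (\<eta>/\<beta>) *\<^sub>R U" using y_def U_def by simp
    show ?thesis unfolding a b by (simp add: algebra_simps)
  qed
  have x3: "x (Suc k) - x k = - \<eta> *\<^sub>R G" using x_step by (simp add: G_def)
  have nn: "0 \<le> \<eta>\<^sup>2 * \<gamma> * (P \<bullet> P)" using gamma by simp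
  have pp: "P \<bullet> P = (1/\<beta> - 1/\<gamma>)\<^sup>2 * (U \<bullet> U) - 2 * (1/\<beta> - 1/\<gamma>) * (1 - 1/\<gamma>) * (U \<bullet> G) + (1 - 1/\<gamma>)\<^sup>2 * (G \<bullet> G)"
  proof -
    have "\<And>a b. (a *\<^sub>R U - b *\<^sub>R G) \<bullet> (a *\<^sub>R U - b *\<^sub>R G) = a\<^sup>2 * (U \<bullet> U) - 2 * a * b * (U \<bullet> G) + b\<^sup>2 * (G \<bullet> G)"
      by (simp add: inner_diff inner_commute algebra_simps power2_eq_square)
    then show ?thesis unfolding P_def by blast
  qed
  have n1: "(norm (E - \<eta> *\<^sub>R G))\<^sup>2 = E \<bullet> E - 2 * \<eta> * (E \<bullet> G) + \<eta>\<^sup>2 * (G \<bullet> G)"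
    unfolding power2_norm_eq_inner by (simp add: inner_diff inner_commute algebra_simps power2_eq_square)
  have n2: "(norm (x k - xhat))\<^sup>2 = E \<bullet> E" by (simp add: E_def power2_norm_eq_inner)
  have n3: "(norm (- (\<eta>/\<beta>) *\<^sub>R U))\<^sup>2 = (\<eta>/\<beta>)\<^sup>2 * (U \<bullet> U)"
    unfolding power2_norm_eq_inner by (simp add: power2_eq_square)
  have n4: "(norm (G - U))\<^sup>2 = G \<bullet> G - 2 * (U \<bullet> G) + U \<bullet> U"
    unfolding power2_norm_eq_inner by (simp add: inner_diff inner_commute algebra_simps)
  have n5: "G \<bullet> (E - (\<eta>/\<beta>) *\<^sub>R U) = E \<bullet> G - (\<eta>/\<beta>) * (U \<bullet> G)"
    by (simp add: inner_diff inner_commute)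
  have n6: "(norm ((\<eta>/\<beta>) *\<^sub>R U - \<eta> *\<^sub>R G))\<^sup>2 = (\<eta>/\<beta>)\<^sup>2 * (U \<bullet> U) - 2 * (\<eta>/\<beta>) * \<eta> * (U \<bullet> G) + \<eta>\<^sup>2 * (G \<bullet> G)"
    unfolding power2_norm_eq_inner by (simp add: inner_diff inner_commute algebra_simps power2_eq_square)
  have n7: "(norm (- \<eta> *\<^sub>R G))\<^sup>2 = \<eta>\<^sup>2 * (G \<bullet> G)"
    unfolding power2_norm_eq_inner by (simp add: power2_eq_square)
  have gu: "G \<bullet> U = U \<bullet> G" by (simp add: inner_commute)
  show ?thesis
    unfolding x1 y1 y2 x2 x3 G_def[symmetric] U_def[symmetric] n1 n2 n3 n4 n5 n6 n7 gu
  proof -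
    note h = lemma1_aux[OF beta(1) gamma, of "E \<bullet> E" \<eta> "E \<bullet> G" "G \<bullet> G" "U \<bullet> U" "U \<bullet> G"]
    from h nn[unfolded pp]
    show "(E \<bullet> E - 2 * \<eta> * (E \<bullet> G) + \<eta>\<^sup>2 * (G \<bullet> G))
      \<le> E \<bullet> E - \<beta> * ((\<eta>/\<beta>)\<^sup>2 * (U \<bullet> U)) + \<eta>\<^sup>2 / \<gamma> * (G \<bullet> G - 2 * (U \<bullet> G) + U \<bullet> U)
        - 2 * \<eta> * (E \<bullet> G - (\<eta>/\<beta>) * (U \<bullet> G)) - (\<beta> - \<gamma>) * ((\<eta>/\<beta>)\<^sup>2 * (U \<bullet> U) - 2 * (\<eta>/\<beta>) * \<eta> * (U \<bullet> G) + \<eta>\<^sup>2 * (G \<bullet> G))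
        - (1 - \<beta>) * (\<eta>\<^sup>2 * (G \<bullet> G))" by linarith
  qed
qed

end
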